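(* Let $\Psi$ be the standard normal CDF, $c>0$ a fixed constant, $\tau>0$ fixed (the paper uses $\tau=100$), and $g(u)=-2\ln\Psi(c-u)$. Consider a ray $\mathbf{x}(t)=\mathbf{o}+t\boldsymbol{\omega}$ intersecting Gaussian surfels $\mathcal{G}_1,\dots,\mathcal{G}_N$ with weights $w_i>0$ and colors $\mathbf{c}_i$, where $\mathcal{G}_i(\mathbf{x})=\exp\bigl(-\tfrac12(\mathbf{x}-\mathbf{m}_i)^T\Sigma_i^{-1}(\mathbf{x}-\mathbf{m}_i)\bigr)$ is a planar (2D) Gaussian with center $\mathbf{m}_i$ and covariance $\Sigma_i$, the ray meets the plane of surfel $i$ at depth $t_i$, and $f_i=w_i\mathcal{G}_i(\mathbf{x}(t_i))$. Define the blended colors $$\widehat{\mathbf{c}}_i=\frac{\sum_{j=1}^N(1-\exp(-w_j))\exp(-\tau|t_j-t_i|)\,\mathbf{c}_j}{\sum_{j=1}^N(1-\exp(-w_j))\exp(-\tau|t_j-t_i|)},$$ and the rendered color $$\mathbf{C}=\sum_{i=1}^N\widehat{\mathbf{c}}_i\bigl(1-\exp(-g(f_i))\bigr)\prod_{j=1}^{i-1}\exp(-g(f_j)),$$ where the surfels are sorted by increasing $t_i$ (ties broken arbitrarily). Then $\mathbf{C}$ is a continuous function of the properties of the Gaussian surfels (in particular it does not jump when two surfels' intersection depths cross and their ordering changes). *)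

theory Defs
  imports "HOL-Analysis.Analysis" "HOL-Probability.Distributions"
begin

definition Psi :: "real \<Rightarrow> real" where
  "Psi x = (LINT y:{..x}|lborel. std_normal_density y)"

definition gfun :: "real \<Rightarrow> real \<Rightarrow> real" where
  "gfun c u = - 2 * ln (Psi (c - u))"

text \<open>Parameters of N Gaussian surfels (indices 0..<N; values at indices \<ge> N are ignored):
  center m i, tangent vectors u i, v i (the planar covariance is
  Sigma i = u i u i^T + v i v i^T, i.e. u i = s_u t_u, v i = s_v t_v), weight w i, colour col i.\<close>
type_synonym surfels =
  "(nat \<Rightarrow> real^3) \<times> (nat \<Rightarrow> real^3) \<times> (nat \<Rightarrow> real^3) \<times> (nat \<Rightarrow> real) \<times> (nat \<Rightarrow> real^3)"

definition s_m :: "surfels \<Rightarrow> nat \<Rightarrow> real^3" where "s_m P = fst P"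
definition s_u :: "surfels \<Rightarrow> nat \<Rightarrow> real^3" where "s_u P = fst (snd P)"
definition s_v :: "surfels \<Rightarrow> nat \<Rightarrow> real^3" where "s_v P = fst (snd (snd P))"
definition s_w :: "surfels \<Rightarrow> nat \<Rightarrow> real" where "s_w P = fst (snd (snd (snd P)))"
definition s_col :: "surfels \<Rightarrow> nat \<Rightarrow> real^3" where "s_col P = snd (snd (snd (snd P)))"

definition depth :: "real^3 \<Rightarrow> real^3 \<Rightarrow> surfels \<Rightarrow> nat \<Rightarrow> real" where
  "depth orig \<omega> P i =
     ((s_m P i - orig) \<bullet> (cross3 (s_u P i) (s_v P i))) / (\<omega> \<bullet> (cross3 (s_u P i) (s_v P i)))"

text \<open>Planar Gaussian G(x) = exp(-1/2 (x-m)^T \<Sigma>^{-1} (x-m)) for x in the surfel plane,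
  where \<Sigma>^{-1} is the inverse of \<Sigma> = U U^T on the plane (U = [u v]); writing
  x - m = a u + b v this quadratic form equals a^2 + b^2, with (a,b) obtained from the Gram
  system.\<close>
definition planar_gauss :: "real^3 \<Rightarrow> real^3 \<Rightarrow> real^3 \<Rightarrow> real^3 \<Rightarrow> real" where
  "planar_gauss m u v x =
     (let d = x - m;
          det = (u \<bullet> u) * (v \<bullet> v) - (u \<bullet> v)^2;
          a = ((v \<bullet> v) * (u \<bullet> d) - (u \<bullet> v) * (v \<bullet> d)) / det;
          b = ((u \<bullet> u) * (v \<bullet> d) - (u \<bullet> v) * (u \<bullet> d)) / det
      in exp (- (a^2 + b^2) / 2))"

definition fval :: "real^3 \<Rightarrow> real^3 \<Rightarrow> surfels \<Rightarrow> nat \<Rightarrow> real" where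
  "fval orig \<omega> P i =
     s_w P i * planar_gauss (s_m P i) (s_u P i) (s_v P i) (orig + depth orig \<omega> P i *\<^sub>R \<omega>)"

definition blended :: "real \<Rightarrow> real^3 \<Rightarrow> real^3 \<Rightarrow> nat \<Rightarrow> surfels \<Rightarrow> nat \<Rightarrow> real^3" where
  "blended \<tau> orig \<omega> N P i =
     (1 / (\<Sum>j<N. (1 - exp (- s_w P j)) * exp (- \<tau> * \<bar>depth orig \<omega> P j - depth orig \<omega> P i\<bar>))) *\<^sub>R
     (\<Sum>j<N. ((1 - exp (- s_w P j)) * exp (- \<tau> * \<bar>depth orig \<omega> P j - depth orig \<omega> P i\<bar>)) *\<^sub>R s_col P j)"

definition render :: "real \<Rightarrow> real \<Rightarrow> real^3 \<Rightarrow> real^3 \<Rightarrow> nat \<Rightarrow> surfels \<Rightarrow> (nat \<Rightarrow> nat) \<Rightarrow> real^3" where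
  "render c \<tau> orig \<omega> N P \<sigma> =
     (\<Sum>k<N. ((1 - exp (- gfun c (fval orig \<omega> P (\<sigma> k)))) *
              (\<Prod>j<k. exp (- gfun c (fval orig \<omega> P (\<sigma> j))))) *\<^sub>R blended \<tau> orig \<omega> N P (\<sigma> k))"

definition sorting_perm :: "nat \<Rightarrow> (nat \<Rightarrow> real) \<Rightarrow> (nat \<Rightarrow> nat) \<Rightarrow> bool" where
  "sorting_perm N t \<sigma> \<longleftrightarrow> bij_betw \<sigma> {..<N} {..<N} \<and>
     (\<forall>k l. k \<le> l \<and> l < N \<longrightarrow> t (\<sigma> k) \<le> t (\<sigma> l))"

text \<open>Admissible configurations: positive weights, nondegenerate planar Gaussians, and the ray
  not parallel to any surfel plane (so that it intersects every surfel plane).\<close>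
definition admissible :: "real^3 \<Rightarrow> nat \<Rightarrow> surfels set" where
  "admissible \<omega> N = {P. \<forall>i<N. s_w P i > 0 \<and> \<omega> \<bullet> (cross3 (s_u P i) (s_v P i)) \<noteq> 0}"

end

theory Submission imports Defs begin
abbreviation "phi \<equiv> std_normal_density"

lemma dens_int: "A \<in> sets borel \<Longrightarrow> integrable lborel (\<lambda>y. indicator A y *\<^sub>R phi y)"
  by (intro integrable_mult_indicator) auto

lemma Psi_eq: "Psi x = (LINT y|lborel. indicator {..x} y *\<^sub>R phi y)"
  unfolding Psi_def set_lebesgue_integral_def by simp

lemma dens_le1: "phi y \<le> 1"
proof -
  have "exp (- y\<^sup>2 / 2) \<le> 1" by simp
  moreover have "1 / sqrt (2 * pi) \<le> 1" using pi_gt3 by (simp add: real_le_rsqrt)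
  ultimately show ?thesis unfolding std_normal_density_def
    by (intro mult_le_one) auto
qed

lemma Psi_pos: "Psi x > 0"
proof -
  have int: "integrable lborel (\<lambda>y. indicator {..x} y *\<^sub>R phi y)" by (rule dens_int) auto
  have nn: "AE y in lborel. 0 \<le> indicator {..x} y *\<^sub>R phi y" by auto
  have ge: "Psi x \<ge> 0" unfolding Psi_eq by (rule integral_nonneg_AE[OF nn])
  show ?thesis
  proof (rule ccontr)
    assume "\<not> ?thesis"
    then have "Psi x = 0" using ge by simp
    then have "AE y in lborel. indicator {..x} y *\<^sub>R phi y = 0"
      using integral_nonneg_eq_0_iff_AE[OF int nn] unfolding Psi_eq by simp
    then have "AE y in lborel. \<not> (y \<in> {x-1..x})"
      by (rule eventually_mono) (auto simp: normal_density_pos[of 1 0, simplified, THEN less_imp_neq, symmetric] split: split_indicator)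
    then have "emeasure lborel {x-1..x} = 0"
      by (subst (asm) AE_iff_measurable[of "{x-1..x}"]) auto
    then show False by simp
  qed
qed

lemma Psi_diff: assumes "x \<le> y" shows "Psi y - Psi x = (LINT z|lborel. indicator {x<..y} z *\<^sub>R phi z)"
proof -
  have "Psi y - Psi x = (LINT z|lborel. indicator {..y} z *\<^sub>R phi z - indicator {..x} z *\<^sub>R phi z)"
    unfolding Psi_eq by (rule Bochner_Integration.integral_diff[symmetric]; rule dens_int; simp)
  also have "\<dots> = (LINT z|lborel. indicator {x<..y} z *\<^sub>R phi z)"
    using assms by (intro Bochner_Integration.integral_cong) (auto split: split_indicator)
  finally show ?thesis .
qed

lemma Psi_lip: "dist (Psi x) (Psi y) \<le> 1 * dist x y"
proof -
  have *: "\<bar>Psi y - Psi x\<bar> \<le> y - x" if "x \<le> y" for x y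
  proof -
    have "0 \<le> (LINT z|lborel. indicator {x<..y} z *\<^sub>R phi z)"
      by (rule integral_nonneg_AE) auto
    moreover have "(LINT z|lborel. indicator {x<..y} z *\<^sub>R phi z) \<le> (LINT z|lborel. indicator {x<..y} z)"
    proof -
      have i1: "integrable lborel (\<lambda>z. indicator {x<..y} z *\<^sub>R phi z)" by (rule dens_int) simp
      have i2: "integrable lborel (indicator {x<..y} :: real \<Rightarrow> real)" using that by (intro integrable_real_indicator) auto
      show ?thesis by (rule integral_mono[OF i1 i2]) (auto simp: dens_le1 split: split_indicator)
    qed
    moreover have "(LINT z|lborel. indicator {x<..y} z :: real) = y - x"
      using that by (simp add: measure_def)
    ultimately show ?thesis using Psi_diff[OF that] by simp
  qed
  show ?thesis
    using *[of x y] *[of y x] by (cases "x \<le> y") (auto simp: dist_real_def abs_minus_commute)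
qed

lemma Psi_cont: "continuous_on UNIV Psi"
  by (rule lipschitz_on_continuous_on[of 1]) (rule lipschitz_onI, rule Psi_lip, simp)
lemma downclosed_lessThan:
  fixes K :: "nat set"
  assumes "finite K" "\<And>k k'. k \<in> K \<Longrightarrow> k' \<le> k \<Longrightarrow> k' \<in> K"
  shows "K = {..<card K}"
proof (cases "K = {}")
  case True then show ?thesis by simp
next
  case False
  have "K = {..Max K}"
    using assms False by (auto intro: Max_ge Max_in)
  then show ?thesis by (metis card_atMost lessThan_Suc_atMost)
qed

lemma sorted_prefix:
  fixes q :: "nat \<Rightarrow> real"
  assumes s: "sorting_perm N t \<sigma>" and p: "\<And>x y. p y \<Longrightarrow> x \<le> y \<Longrightarrow> p x"
  shows "(\<Sum>k\<in>{k. k<N \<and> p (t (\<sigma> k))}. (\<Prod>j<k. q (\<sigma> j)) - (\<Prod>j<Suc k. q (\<sigma> j)))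
       = 1 - (\<Prod>i\<in>{i. i<N \<and> p (t i)}. q i)"
proof -
  define K where "K = {k. k<N \<and> p (t (\<sigma> k))}"
  have bij: "bij_betw \<sigma> {..<N} {..<N}" and mono: "\<And>k l. k \<le> l \<Longrightarrow> l < N \<Longrightarrow> t (\<sigma> k) \<le> t (\<sigma> l)"
    using s unfolding sorting_perm_def by auto
  have "K = {..<card K}"
    by (rule downclosed_lessThan) (auto simp: K_def intro: p mono)
  then obtain m where Km: "K = {..<m}" by blast
  have KN: "K \<subseteq> {..<N}" by (auto simp: K_def)
  have "(\<Sum>k\<in>K. (\<Prod>j<k. q (\<sigma> j)) - (\<Prod>j<Suc k. q (\<sigma> j))) = 1 - (\<Prod>j<m. q (\<sigma> j))"
    unfolding Km by (subst sum_lessThan_telescope') simp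
  also have "(\<Prod>j<m. q (\<sigma> j)) = (\<Prod>i\<in>\<sigma> ` K. q i)"
    unfolding Km[symmetric]
    by (rule prod.reindex[symmetric, unfolded comp_def])
       (meson KN bij bij_betw_imp_inj_on inj_on_subset)
  also have "\<sigma> ` K = {i. i<N \<and> p (t i)}"
  proof
    show "\<sigma> ` K \<subseteq> {i. i<N \<and> p (t i)}"
      using bij by (auto simp: K_def bij_betw_def)
    show "{i. i<N \<and> p (t i)} \<subseteq> \<sigma> ` K"
    proof
      fix i assume "i \<in> {i. i<N \<and> p (t i)}"
      then have "i \<in> \<sigma> ` {..<N}" "p (t i)" using bij by (auto simp: bij_betw_def)
      then show "i \<in> \<sigma> ` K" by (auto simp: K_def)
    qed
  qed
  finally show ?thesis unfolding K_def .
qed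

lemma order_indep_form:
  fixes q :: "nat \<Rightarrow> real" and b :: "nat \<Rightarrow> 'a::real_vector"
  assumes s: "sorting_perm N t \<sigma>" and bt: "\<And>i j. i<N \<Longrightarrow> j<N \<Longrightarrow> t i = t j \<Longrightarrow> b i = b j"
  shows "(\<Sum>k<N. ((1 - q (\<sigma> k)) * (\<Prod>j<k. q (\<sigma> j))) *\<^sub>R b (\<sigma> k))
    = (\<Sum>d\<in>t ` {..<N}. ((\<Prod>i\<in>{i. i<N \<and> t i < d}. q i) - (\<Prod>i\<in>{i. i<N \<and> t i \<le> d}. q i))
          *\<^sub>R b (SOME i. i<N \<and> t i = d))"
proof -
  define B where "B d = b (SOME i. i<N \<and> t i = d)" for d
  define W where "W k = (\<Prod>j<k. q (\<sigma> j)) - (\<Prod>j<Suc k. q (\<sigma> j))" for k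
  have bij: "bij_betw \<sigma> {..<N} {..<N}"
    using s unfolding sorting_perm_def by auto
  have sN: "\<sigma> k < N" if "k < N" for k using bij that by (auto simp: bij_betw_def)
  have B: "b (\<sigma> k) = B (t (\<sigma> k))" if "k < N" for k
  proof -
    have ex: "\<exists>i. i<N \<and> t i = t (\<sigma> k)" using sN[OF that] by blast
    have h: "(SOME i. i<N \<and> t i = t (\<sigma> k)) < N \<and> t (SOME i. i<N \<and> t i = t (\<sigma> k)) = t (\<sigma> k)"
      by (rule someI_ex[OF ex])
    have "b (\<sigma> k) = b (SOME i. i<N \<and> t i = t (\<sigma> k))"
      by (rule bt[OF sN[OF that] conjunct1[OF h] conjunct2[OF h, symmetric]])
    then show ?thesis unfolding B_def .
  qed
  have "(\<Sum>k<N. ((1 - q (\<sigma> k)) * (\<Prod>j<k. q (\<sigma> j))) *\<^sub>R b (\<sigma> k))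
      = (\<Sum>k<N. W k *\<^sub>R B (t (\<sigma> k)))"
    by (rule sum.cong) (auto simp: W_def B algebra_simps)
  also have "\<dots> = (\<Sum>d\<in>(\<lambda>k. t (\<sigma> k)) ` {..<N}. (\<Sum>k\<in>{k\<in>{..<N}. t (\<sigma> k) = d}. W k *\<^sub>R B (t (\<sigma> k))))"
    by (rule sum.image_gen) simp
  also have "(\<lambda>k. t (\<sigma> k)) ` {..<N} = t ` {..<N}"
    using bij by (metis bij_betw_def image_image)
  also have "(\<Sum>d\<in>t ` {..<N}. (\<Sum>k\<in>{k\<in>{..<N}. t (\<sigma> k) = d}. W k *\<^sub>R B (t (\<sigma> k))))
     = (\<Sum>d\<in>t ` {..<N}. ((\<Prod>i\<in>{i. i<N \<and> t i < d}. q i) - (\<Prod>i\<in>{i. i<N \<and> t i \<le> d}. q i)) *\<^sub>R B d)"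
  proof (rule sum.cong[OF refl])
    fix d
    have "(\<Sum>k\<in>{k\<in>{..<N}. t (\<sigma> k) = d}. W k *\<^sub>R B (t (\<sigma> k))) = (\<Sum>k\<in>{k\<in>{..<N}. t (\<sigma> k) = d}. W k *\<^sub>R B d)"
      by (rule sum.cong) auto
    also have "\<dots> = (\<Sum>k\<in>{k\<in>{..<N}. t (\<sigma> k) = d}. W k) *\<^sub>R B d"
      by (simp add: scaleR_sum_left)
    also have "(\<Sum>k\<in>{k\<in>{..<N}. t (\<sigma> k) = d}. W k) = (\<Sum>k\<in>{k. k<N \<and> t (\<sigma> k) \<le> d} - {k. k<N \<and> t (\<sigma> k) < d}. W k)"
      by (rule sum.cong) auto
    also have "(\<Sum>k\<in>{k. k<N \<and> t (\<sigma> k) \<le> d} - {k. k<N \<and> t (\<sigma> k) < d}. W k)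
        = (\<Sum>k\<in>{k. k<N \<and> t (\<sigma> k) \<le> d}. W k) - (\<Sum>k\<in>{k. k<N \<and> t (\<sigma> k) < d}. W k)"
      by (rule sum_diff) auto
    also have "\<dots> = (1 - (\<Prod>i\<in>{i. i<N \<and> t i \<le> d}. q i)) - (1 - (\<Prod>i\<in>{i. i<N \<and> t i < d}. q i))"
      unfolding W_def
      by (subst sorted_prefix[OF s, where p = "\<lambda>x. x \<le> d"], simp,
          subst sorted_prefix[OF s, where p = "\<lambda>x. x < d"], simp, rule refl)
    finally show "(\<Sum>k\<in>{k\<in>{..<N}. t (\<sigma> k) = d}. W k *\<^sub>R B (t (\<sigma> k)))
        = ((\<Prod>i\<in>{i. i<N \<and> t i < d}. q i) - (\<Prod>i\<in>{i. i<N \<and> t i \<le> d}. q i)) *\<^sub>R B d"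
      by simp
  qed
  finally show ?thesis unfolding B_def .
qed

lemma order_indep:
  fixes q :: "nat \<Rightarrow> real" and b :: "nat \<Rightarrow> 'a::real_vector"
  assumes "sorting_perm N t \<sigma>1" "sorting_perm N t \<sigma>2"
    and "\<And>i j. i<N \<Longrightarrow> j<N \<Longrightarrow> t i = t j \<Longrightarrow> b i = b j"
  shows "(\<Sum>k<N. ((1 - q (\<sigma>1 k)) * (\<Prod>j<k. q (\<sigma>1 j))) *\<^sub>R b (\<sigma>1 k))
       = (\<Sum>k<N. ((1 - q (\<sigma>2 k)) * (\<Prod>j<k. q (\<sigma>2 j))) *\<^sub>R b (\<sigma>2 k))"
  using order_indep_form[where q=q and b=b, OF assms(1,3)] order_indep_form[where q=q and b=b, OF assms(2,3)] by (simp only:)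
lemma cont_sm[continuous_intros]: "continuous_on S (\<lambda>P. s_m P i)"
  unfolding s_m_def
  by (rule continuous_on_product_then_coordinatewise, rule continuous_on_fst, rule continuous_on_id)
lemma cont_su[continuous_intros]: "continuous_on S (\<lambda>P. s_u P i)"
  unfolding s_u_def
  by (rule continuous_on_product_then_coordinatewise, intro continuous_intros)
lemma cont_sv[continuous_intros]: "continuous_on S (\<lambda>P. s_v P i)"
  unfolding s_v_def
  by (rule continuous_on_product_then_coordinatewise, intro continuous_intros)
lemma cont_sw[continuous_intros]: "continuous_on S (\<lambda>P. s_w P i)"
  unfolding s_w_def
  by (rule continuous_on_product_then_coordinatewise, intro continuous_intros)
lemma cont_scol[continuous_intros]: "continuous_on S (\<lambda>P. s_col P i)"
  unfolding s_col_def
  by (rule continuous_on_product_then_coordinatewise, intro continuous_intros)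

declare continuous_on_cross[continuous_intros]

lemma adm_D: "P \<in> admissible \<omega> N \<Longrightarrow> i < N \<Longrightarrow> s_w P i > 0 \<and> \<omega> \<bullet> (cross3 (s_u P i) (s_v P i)) \<noteq> 0"
  unfolding admissible_def by auto

lemma det_ne: assumes "\<omega> \<bullet> cross3 u v \<noteq> 0"
  shows "(u \<bullet> u) * (v \<bullet> v) - (u \<bullet> v)\<^sup>2 \<noteq> 0"
proof -
  have "cross3 u v \<noteq> 0" using assms by auto
  then have "(norm (cross3 u v))\<^sup>2 \<noteq> 0" by simp
  moreover have "(norm (cross3 u v))\<^sup>2 = (u \<bullet> u) * (v \<bullet> v) - (u \<bullet> v)\<^sup>2"
    using norm_cross_dot[of u v] by (simp add: power_mult_distrib flip: power2_norm_eq_inner)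
  ultimately show ?thesis by simp
qed

lemma cont_depth: "i < N \<Longrightarrow> continuous_on (admissible \<omega> N) (\<lambda>P. depth orig \<omega> P i)"
  unfolding depth_def by (intro continuous_intros) (auto dest: adm_D)

lemma cont_fval: "i < N \<Longrightarrow> continuous_on (admissible \<omega> N) (\<lambda>P. fval orig \<omega> P i)"
  unfolding fval_def planar_gauss_def Let_def
  by (intro continuous_intros cont_depth) (auto dest!: adm_D, (drule det_ne, simp)+)

lemma Psi_cont'[continuous_intros]: "continuous_on S f \<Longrightarrow> continuous_on S (\<lambda>x. Psi (f x))"
  by (rule continuous_on_compose2[OF Psi_cont]) auto

lemma cont_q: "i < N \<Longrightarrow> continuous_on (admissible \<omega> N) (\<lambda>P. exp (- gfun c (fval orig \<omega> P i)))"
  unfolding gfun_def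
  by (intro continuous_intros cont_fval) (auto simp: Psi_pos[THEN less_imp_neq, symmetric])

lemma blended_den_pos:
  assumes "P \<in> admissible \<omega> N" "i < N"
  shows "(\<Sum>j<N. (1 - exp (- s_w P j)) * exp (- \<tau> * \<bar>depth orig \<omega> P j - depth orig \<omega> P i\<bar>)) > 0"
proof -
  have nn: "\<forall>j\<in>{..<N}. 0 \<le> (1 - exp (- s_w P j)) * exp (- \<tau> * \<bar>depth orig \<omega> P j - depth orig \<omega> P i\<bar>)"
    using assms(1) by (auto dest!: adm_D intro!: mult_nonneg_nonneg)
  have "0 < (1 - exp (- s_w P i)) * exp (- \<tau> * \<bar>depth orig \<omega> P i - depth orig \<omega> P i\<bar>)"
    using adm_D[OF assms] by simp
  also have "\<dots> \<le> (\<Sum>j<N. (1 - exp (- s_w P j)) * exp (- \<tau> * \<bar>depth orig \<omega> P j - depth orig \<omega> P i\<bar>))"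
    by (rule member_le_sum[where f = "\<lambda>j. (1 - exp (- s_w P j)) * exp (- \<tau> * \<bar>depth orig \<omega> P j - depth orig \<omega> P i\<bar>)"]) (use assms(2) nn in auto)
  finally show ?thesis .
qed

lemma cont_blended: "i < N \<Longrightarrow> continuous_on (admissible \<omega> N) (\<lambda>P. blended \<tau> orig \<omega> N P i)"
  unfolding blended_def
  by (intro continuous_intros cont_depth; simp?) (auto dest: blended_den_pos[of _ \<omega> N i \<tau> orig])

lemma cont_render:
  assumes "\<And>k. k < N \<Longrightarrow> \<sigma> k < N"
  shows "continuous_on (admissible \<omega> N) (\<lambda>P. render c \<tau> orig \<omega> N P \<sigma>)"
  unfolding render_def
  by (intro continuous_intros cont_q cont_blended assms; simp)

lemma render_restrict: "render c \<tau> orig \<omega> N P \<sigma> = render c \<tau> orig \<omega> N P (restrict \<sigma> {..<N})"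
  unfolding render_def by (intro sum.cong refl arg_cong2[where f="(*\<^sub>R)"] arg_cong2[where f="(*)"] prod.cong) auto

theorem theorem2:
  fixes c \<tau> :: real and orig \<omega> :: "real^3" and N :: nat
    and ord :: "surfels \<Rightarrow> nat \<Rightarrow> nat"
  assumes "c > 0" and "\<tau> > 0"
    and "\<forall>P\<in>admissible \<omega> N. sorting_perm N (depth orig \<omega> P) (ord P)"
  shows "continuous_on (admissible \<omega> N) (\<lambda>P. render c \<tau> orig \<omega> N P (ord P))"
proof -
  define A where "A = admissible \<omega> N"
  define R where "R P \<sigma> = render c \<tau> orig \<omega> N P \<sigma>" for P \<sigma>
  define F where "F = ({..<N} \<rightarrow>\<^sub>E {..<N})"
  have finF: "finite F" unfolding F_def by (rule finite_PiE) auto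
  have ordP: "sorting_perm N (depth orig \<omega> P) (ord P)" if "P \<in> A" for P
    using assms(3) that A_def by auto
  show ?thesis unfolding continuous_on_def A_def[symmetric]
  proof (intro ballI)
    fix P0 assume P0: "P0 \<in> A"
    show "((\<lambda>P. render c \<tau> orig \<omega> N P (ord P)) \<longlongrightarrow> render c \<tau> orig \<omega> N P0 (ord P0)) (at P0 within A)"
    proof (rule tendstoI)
      fix e :: real assume e: "e > 0"
      have ev1: "\<forall>\<^sub>F P in at P0 within A. \<forall>\<sigma>\<in>F. dist (R P \<sigma>) (R P0 \<sigma>) < e"
      proof (rule eventually_ball_finite[OF finF], intro ballI)
        fix \<sigma> assume "\<sigma> \<in> F"
        then have "\<And>k. k < N \<Longrightarrow> \<sigma> k < N" unfolding F_def by auto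
        from cont_render[OF this, where c=c and \<tau>=\<tau> and orig=orig and \<omega>=\<omega>] P0 have "((\<lambda>P. R P \<sigma>) \<longlongrightarrow> R P0 \<sigma>) (at P0 within A)"
          unfolding continuous_on_def R_def A_def by auto
        then show "\<forall>\<^sub>F P in at P0 within A. dist (R P \<sigma>) (R P0 \<sigma>) < e"
          using e by (rule tendstoD)
      qed
      define D where "D = {(a, b). a < N \<and> b < N \<and> depth orig \<omega> P0 a < depth orig \<omega> P0 b}"
      have finD: "finite D"
        by (rule finite_subset[of _ "{..<N} \<times> {..<N}"]) (auto simp: D_def)
      have ev2: "\<forall>\<^sub>F P in at P0 within A. \<forall>ab\<in>D. depth orig \<omega> P (fst ab) < depth orig \<omega> P (snd ab)"
      proof (rule eventually_ball_finite[OF finD], intro ballI)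
        fix ab assume "ab \<in> D"
        then obtain a b where ab: "ab = (a, b)" "a < N" "b < N" "depth orig \<omega> P0 a < depth orig \<omega> P0 b"
          unfolding D_def by auto
        have "continuous_on A (\<lambda>P. depth orig \<omega> P a - depth orig \<omega> P b)"
          unfolding A_def by (intro continuous_intros cont_depth ab)
        then have "((\<lambda>P. depth orig \<omega> P a - depth orig \<omega> P b) \<longlongrightarrow> depth orig \<omega> P0 a - depth orig \<omega> P0 b) (at P0 within A)"
          using P0 unfolding continuous_on_def by auto
        then have "\<forall>\<^sub>F P in at P0 within A. depth orig \<omega> P a - depth orig \<omega> P b < 0"
          by (rule order_tendstoD) (use ab in simp)
        then show "\<forall>\<^sub>F P in at P0 within A. depth orig \<omega> P (fst ab) < depth orig \<omega> P (snd ab)"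
          by (rule eventually_mono) (simp add: ab)
      qed
      have ev3: "\<forall>\<^sub>F P in at P0 within A. P \<in> A"
        by (simp add: eventually_at_filter)
      show "\<forall>\<^sub>F P in at P0 within A. dist (render c \<tau> orig \<omega> N P (ord P)) (render c \<tau> orig \<omega> N P0 (ord P0)) < e"
        using ev1 ev2 ev3
      proof eventually_elim
        case (elim P)
        have sP: "sorting_perm N (depth orig \<omega> P) (ord P)" using ordP elim(3) .
        have sP0: "sorting_perm N (depth orig \<omega> P0) (ord P0)" using ordP P0 .
        have bijP: "bij_betw (ord P) {..<N} {..<N}" using sP unfolding sorting_perm_def by auto
        have sPP0: "sorting_perm N (depth orig \<omega> P0) (ord P)"
          unfolding sorting_perm_def
        proof (intro conjI bijP allI impI)
          fix k l assume kl: "k \<le> l \<and> l < N"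
          show "depth orig \<omega> P0 (ord P k) \<le> depth orig \<omega> P0 (ord P l)"
          proof (rule ccontr)
            assume "\<not> ?thesis"
            then have "(ord P l, ord P k) \<in> D"
              using kl bijP unfolding D_def bij_betw_def by auto
            then have "depth orig \<omega> P (ord P l) < depth orig \<omega> P (ord P k)"
              using elim(2) by fastforce
            moreover have "depth orig \<omega> P (ord P k) \<le> depth orig \<omega> P (ord P l)"
              using sP kl unfolding sorting_perm_def by auto
            ultimately show False by simp
          qed
        qed
        define \<sigma>' where "\<sigma>' = restrict (ord P) {..<N}"
        have "\<sigma>' \<in> F" unfolding \<sigma>'_def F_def using bijP by (auto simp: bij_betw_def)
        have eqP0: "render c \<tau> orig \<omega> N P0 (ord P) = render c \<tau> orig \<omega> N P0 (ord P0)"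
          unfolding render_def
          by (rule order_indep[OF sPP0 sP0]) (simp add: blended_def)
        have "dist (render c \<tau> orig \<omega> N P (ord P)) (render c \<tau> orig \<omega> N P0 (ord P0))
            = dist (R P \<sigma>') (R P0 \<sigma>')"
          unfolding R_def \<sigma>'_def eqP0[symmetric] render_restrict[symmetric] ..
        also have "\<dots> < e" using elim(1) \<open>\<sigma>' \<in> F\<close> by blast
        finally show ?case .
      qed
    qed
  qed
qed

end
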